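(* Let $X$ be a fixed finite set of $m+u$ elements ($m,u\ge 1$), and let $x_1,\dots,x_m$ be random variables obtained by sampling $m$ elements of $X$ uniformly at random without replacement. Let $\phi\colon X^m\to\mathbb{R}$ be a symmetric function such that for all $i\in[1,m]$ and all $x_1,\dots,x_m\in X$, $x'_i\in X$, $$\big|\phi(x_1,\dots,x_m)-\phi(x_1,\dots,x_{i-1},x'_i,x_{i+1},\dots,x_m)\big|\le c .$$ Then for all $\epsilon>0$, $$\Pr\big[\phi-\mathbb{E}[\phi]\ge\epsilon\big]\le\exp\Big[\frac{-2\epsilon^2}{\alpha(m,u)\,c^2}\Big],\qquad \alpha(m,u)=\frac{mu}{m+u-1/2}\cdot\frac{1}{1-1/(2\max\{m,u\})}.$$
   Context: A function $\phi\colon X^m\to\mathbb{R}$ is symmetric if its value does not depend on the order of its arguments: $\phi(x_{\sigma(1)},\dots,x_{\sigma(m)})=\phi(x_1,\dots,x_m)$ for every permutation $\sigma$ of $[1,m]$. *)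

theory Defs
  imports "HOL-Probability.Probability"
begin

text \<open>Sampling m elements of X uniformly at random without replacement:
  the uniform distribution on sequences of m distinct elements of X.\<close>
definition samples_wo_repl :: "'a set \<Rightarrow> nat \<Rightarrow> 'a list set" where
  "samples_wo_repl X m = {xs. set xs \<subseteq> X \<and> length xs = m \<and> distinct xs}"

definition symmetric_on :: "'a set \<Rightarrow> nat \<Rightarrow> ('a list \<Rightarrow> real) \<Rightarrow> bool" where
  "symmetric_on X m \<phi> \<longleftrightarrow>
     (\<forall>xs \<sigma>. set xs \<subseteq> X \<and> length xs = m \<and> \<sigma> permutes {0..<m} \<longrightarrow>
        \<phi> (map (\<lambda>i. xs ! \<sigma> i) [0..<m]) = \<phi> xs)"

definition alpha :: "nat \<Rightarrow> nat \<Rightarrow> real" where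
  "alpha m u = (real m * real u / (real m + real u - 1/2)) *
               (1 / (1 - 1 / (2 * real (max m u))))"

end

theory Submission
  imports Defs "HOL-Combinatorics.Multiset_Permutations"
begin


lemma swr_alt: "samples_wo_repl A k = {xs. length xs = k \<and> distinct xs \<and> set xs \<subseteq> A}"
  unfolding samples_wo_repl_def by auto

lemma finite_swr: "finite A \<Longrightarrow> finite (samples_wo_repl A k)"
  unfolding samples_wo_repl_def
  by (rule finite_subset[OF _ finite_lists_length_eq[of A k]]) auto

lemma card_swr_real:
  assumes "finite A" "k \<le> card A"
  shows "real (card (samples_wo_repl A k)) = fact (card A) / fact (card A - k)"
proof -
  have "card (samples_wo_repl A k) = \<Prod>{card A - k + 1 .. card A}"
    unfolding swr_alt by (rule card_lists_distinct_length_eq[OF assms])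
  moreover have "(fact (card A) :: nat) = fact (card A - k) * \<Prod>{Suc (card A - k)..card A}"
    by (rule fact_eq_fact_times) simp
  ultimately have "card (samples_wo_repl A k) * fact (card A - k) = (fact (card A) :: nat)"
    by simp
  then have "real (card (samples_wo_repl A k)) * fact (card A - k) = fact (card A)"
    by (metis of_nat_fact of_nat_mult)
  then show ?thesis by (simp add: field_simps)
qed

lemma card_swr_pos:
  assumes "finite A" "k \<le> card A"
  shows "card (samples_wo_repl A k) > 0"
proof -
  have "real (card (samples_wo_repl A k)) > 0" using card_swr_real[OF assms] by simp
  then show ?thesis by simp
qed

lemma swr_Suc:
  "samples_wo_repl R (Suc k) = (\<lambda>(x,ys). x # ys) ` (SIGMA x:R. samples_wo_repl (R - {x}) k)"
  unfolding samples_wo_repl_def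
  by (auto simp: length_Suc_conv image_iff)

lemma sum_swr_Suc:
  assumes "finite R"
  shows "(\<Sum>xs\<in>samples_wo_repl R (Suc k). h xs) = (\<Sum>x\<in>R. \<Sum>ys\<in>samples_wo_repl (R - {x}) k. h (x # ys))"
proof -
  have inj: "inj_on (\<lambda>(x,ys). x # ys) (SIGMA x:R. samples_wo_repl (R - {x}) k)"
    by (auto simp: inj_on_def)
  have "(\<Sum>xs\<in>samples_wo_repl R (Suc k). h xs) = (\<Sum>p\<in>(SIGMA x:R. samples_wo_repl (R - {x}) k). h (fst p # snd p))"
    unfolding swr_Suc by (subst sum.reindex[OF inj]) (auto intro!: sum.cong)
  also have "\<dots> = (\<Sum>x\<in>R. \<Sum>ys\<in>samples_wo_repl (R - {x}) k. h (x # ys))"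
    using sum.Sigma[of R "\<lambda>x. samples_wo_repl (R - {x}) k" "\<lambda>x ys. h (x # ys)"]
    by (simp add: assms finite_swr split_def)
  finally show ?thesis .
qed

lemma sym_from_symmetric_on:
  assumes "symmetric_on X m \<phi>" "xs \<in> samples_wo_repl X m" "ys \<in> samples_wo_repl X m" "set xs = set ys"
  shows "\<phi> xs = \<phi> ys"
proof -
  have "mset ys = mset xs" using assms(2-4) unfolding samples_wo_repl_def
    by (simp add: set_eq_iff_mset_eq_distinct)
  then obtain p where p: "p permutes {..<length xs}" "permute_list p xs = ys"
    by (rule mset_eq_permutation)
  have "p permutes {0..<m}" using p(1) assms(2) by (simp add: samples_wo_repl_def lessThan_atLeast0)
  then have "\<phi> (map (\<lambda>i. xs ! p i) [0..<m]) = \<phi> xs"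
    using assms(1,2) unfolding symmetric_on_def samples_wo_repl_def by blast
  moreover have "map (\<lambda>i. xs ! p i) [0..<m] = ys" using p(2) assms(2)
    by (simp add: permute_list_def samples_wo_repl_def)
  ultimately show ?thesis by simp
qed



lemma hoeff_finite:
  fixes g :: "'a \<Rightarrow> real"
  assumes "finite A" "A \<noteq> {}" "\<And>x y. x \<in> A \<Longrightarrow> y \<in> A \<Longrightarrow> g x - g y \<le> d" "l > 0"
  shows "(\<Sum>x\<in>A. exp (l * (g x - (\<Sum>y\<in>A. g y) / card A))) / card A \<le> exp (l\<^sup>2 * d\<^sup>2 / 8)"
proof -
  define M where "M = measure_pmf (pmf_of_set A)"
  define a where "a = Min (g ` A)"
  define b where "b = Max (g ` A)"
  have fin: "finite (g ` A)" "g ` A \<noteq> {}" using assms by auto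
  obtain x1 where x1: "x1 \<in> A" "b = g x1" using Max_in[OF fin] unfolding b_def by auto
  obtain x2 where x2: "x2 \<in> A" "a = g x2" using Min_in[OF fin] unfolding a_def by auto
  have ab: "0 \<le> b - a" "b - a \<le> d" using assms(3)[OF x1(1) x2(1)] x1 x2
    using Min_le[OF fin(1)] x1(1) unfolding a_def by auto
  have r1: "g \<in> borel_measurable M" unfolding M_def by simp
  have r2: "AE x in M. g x \<in> {a..b}" unfolding M_def
      using assms(1,2) fin(1) by (intro AE_pmfI) (auto simp: a_def b_def)
  have r0: "prob_space M" unfolding M_def by (rule prob_space_measure_pmf)
  interpret interval_bounded_random_variable M g a b
    by (intro interval_bounded_random_variable.intro interval_bounded_random_variable_axioms.intro r0 r1 r2)
  have ps: "prob_space M" by (rule prob_space_axioms)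
  have "nn_integral M (\<lambda>x. exp (l * (g x - expectation g))) \<le> ennreal (exp (l\<^sup>2 * (b - a)\<^sup>2 / 8))"
    by (rule Hoeffdings_lemma_nn_integral[OF assms(4)])
  moreover have "nn_integral M (\<lambda>x. exp (l * (g x - expectation g))) = ennreal (integral\<^sup>L M (\<lambda>x. exp (l * (g x - expectation g))))"
    unfolding M_def using assms(1,2)
    by (intro nn_integral_eq_integral integrable_measure_pmf_finite) auto
  ultimately have "integral\<^sup>L M (\<lambda>x. exp (l * (g x - expectation g))) \<le> exp (l\<^sup>2 * (b - a)\<^sup>2 / 8)"
    by (simp add: ennreal_le_iff2)
  also have "\<dots> \<le> exp (l\<^sup>2 * d\<^sup>2 / 8)"
    using ab by (intro exp_mono divide_right_mono mult_left_mono power_mono) auto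
  finally show ?thesis unfolding M_def using assms(1,2) by (simp add: integral_pmf_of_set)
qed

lemma tele:
  fixes u :: nat assumes "u \<ge> 1"
  shows "(\<Sum>j<m. 1 / (real u + real j)\<^sup>2) \<le> 1 / (real u - 1/2) - 1 / (real u + real m - 1/2)"
proof (induction m)
  case 0 then show ?case by simp
next
  case (Suc m)
  define x where "x = real u + real m"
  have x: "x \<ge> 1" using assms unfolding x_def by simp
  have "1 / x\<^sup>2 \<le> 1 / (x - 1/2) - 1 / (x + 1/2)"
  proof -
    have e1: "1 / (x - 1/2) - 1 / (x + 1/2) = 1 / (x\<^sup>2 - 1/4)"
      using x by (simp add: field_simps power2_eq_square)
    have xx: "x * x \<ge> 1" using x mult_mono[of 1 x 1 x] by simp
    have e2: "1 / x\<^sup>2 \<le> 1 / (x\<^sup>2 - 1/4)" using xx by (intro divide_left_mono) (auto simp: power2_eq_square mult_pos_pos)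
    show ?thesis using e1 e2 by simp
  qed
  then show ?case using Suc unfolding x_def by (simp add: algebra_simps)
qed

definition SS :: "nat \<Rightarrow> nat \<Rightarrow> real" where
  "SS u k = (\<Sum>j<k. (real u / (real u + real j))\<^sup>2)"

lemma SS_bound:
  fixes u m :: nat assumes "u \<ge> 1" "m \<ge> 1"
  shows "SS u m \<le> real m * real u / (real m + real u - 1/2) * (1 / (1 - 1 / (2 * real u)))"
proof -
  have "SS u m = real u ^ 2 * (\<Sum>j<m. 1 / (real u + real j)\<^sup>2)"
    unfolding SS_def by (simp add: sum_distrib_left power_divide)
  also have "\<dots> \<le> real u ^ 2 * (1 / (real u - 1/2) - 1 / (real u + real m - 1/2))"
    by (intro mult_left_mono tele assms) auto
  also have "\<dots> = real m * real u / (real m + real u - 1/2) * (1 / (1 - 1 / (2 * real u)))"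
    using assms by (simp add: field_simps power2_eq_square)
  finally show ?thesis .
qed



definition symL :: "'a set \<Rightarrow> nat \<Rightarrow> ('a list \<Rightarrow> real) \<Rightarrow> bool" where
  "symL R k f \<longleftrightarrow> (\<forall>xs\<in>samples_wo_repl R k. \<forall>ys\<in>samples_wo_repl R k. set xs = set ys \<longrightarrow> f xs = f ys)"

definition bdL :: "'a set \<Rightarrow> nat \<Rightarrow> real \<Rightarrow> ('a list \<Rightarrow> real) \<Rightarrow> bool" where
  "bdL R k c f \<longleftrightarrow> (\<forall>xs\<in>samples_wo_repl R k. \<forall>i<k. \<forall>x'\<in>R - set xs. \<bar>f xs - f (xs[i:=x'])\<bar> \<le> c)"

lemma card_ratio:
  assumes "finite A" "card A = k + u" "u \<ge> 1" "b \<in> A"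
  shows "real (card (samples_wo_repl (A - {b}) k)) / real (card (samples_wo_repl A k)) = real u / (real k + real u)"
proof -
  obtain v where v: "u = Suc v" using assms(3) by (cases u) auto
  have cA: "card (A - {b}) = k + v" using assms v by simp
  have 1: "real (card (samples_wo_repl A k)) = fact (k + u) / fact u"
    using card_swr_real[OF assms(1)] assms(2) by simp
  have 2: "real (card (samples_wo_repl (A - {b}) k)) = fact (k + v) / fact v"
    using card_swr_real[of "A - {b}" k] assms(1) cA by simp
  have f1: "(fact (k+u)::real) = (real k + real u) * fact (k+v)" using v by simp
  have f2: "(fact u::real) = real u * fact v" using v by simp
  have "u > 0" "real k + real u > 0" using assms(3) by auto
  moreover have "real k * fact (k+v) + real u * fact (k+v) \<noteq> (0::real)"
  proof -
    have "(real k + real u) * fact (k+v) > 0" using assms(3) by (intro mult_pos_pos) auto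
    then show ?thesis by (simp add: algebra_simps)
  qed
  ultimately show ?thesis unfolding 1 2 f1 f2 by (simp add: field_simps)
qed

lemma coupling:
  fixes f :: "'a list \<Rightarrow> real"
  assumes fin: "finite R" and cR: "card R = Suc k + u" and u: "u \<ge> 1"
    and sym: "symL R (Suc k) f" and bd: "bdL R (Suc k) c f" and c: "c \<ge> 0"
    and ab: "a \<in> R" "b \<in> R"
  shows "(\<Sum>ys\<in>samples_wo_repl (R - {a}) k. f (a # ys)) / card (samples_wo_repl (R - {a}) k)
       - (\<Sum>ys\<in>samples_wo_repl (R - {b}) k. f (b # ys)) / card (samples_wo_repl (R - {b}) k)
       \<le> c * real u / (real k + real u)"
proof (cases "a = b")
  case True then show ?thesis using c by simp
next
  case False
  define \<tau> where "\<tau> z = (if z = a then b else if z = b then a else z)" for z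
  define La where "La = samples_wo_repl (R - {a}) k"
  define Lb where "Lb = samples_wo_repl (R - {b}) k"
  have cRa: "card (R - {a}) = k + u" "card (R - {b}) = k + u" using fin cR ab by auto
  have finLa: "finite La" "finite Lb" unfolding La_def Lb_def using fin by (auto intro: finite_swr)
  have cLab: "card La = card Lb" unfolding La_def Lb_def
    using card_lists_distinct_length_eq[of "R - {a}" k] card_lists_distinct_length_eq[of "R - {b}" k]
      fin cRa by (simp add: swr_alt)
  have Npos: "card La > 0" unfolding La_def using card_swr_pos[of "R - {a}" k] fin cRa by simp
  have ttau: "\<tau> (\<tau> z) = z" for z unfolding \<tau>_def by auto
  have maptt: "map \<tau> (map \<tau> ys) = ys" for ys by (induction ys) (auto simp: ttau)
  have injt: "inj \<tau>" by (metis injI ttau)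
  have mapLa: "map \<tau> ys \<in> Lb" if "ys \<in> La" for ys
  proof -
    have "set (map \<tau> ys) \<subseteq> R - {b}" using that ab False unfolding La_def samples_wo_repl_def \<tau>_def by auto
    then show ?thesis using that injt unfolding La_def Lb_def samples_wo_repl_def
      by (auto simp: distinct_map inj_on_subset)
  qed
  have mapLb: "map \<tau> ys \<in> La" if "ys \<in> Lb" for ys
  proof -
    have "set (map \<tau> ys) \<subseteq> R - {a}" using that ab False unfolding Lb_def samples_wo_repl_def \<tau>_def by auto
    then show ?thesis using that injt unfolding La_def Lb_def samples_wo_repl_def
      by (auto simp: distinct_map inj_on_subset)
  qed
  have bij: "bij_betw (map \<tau>) La Lb"
    by (rule bij_betw_byWitness[where f' = "map \<tau>"]) (use mapLa mapLb maptt in auto)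
  have sb: "(\<Sum>ys\<in>Lb. f (b # ys)) = (\<Sum>ys\<in>La. f (b # map \<tau> ys))"
    using sum.reindex_bij_betw[OF bij, of "\<lambda>ys. f (b # ys)"] by simp
  have tm: "f (a # ys) - f (b # map \<tau> ys) \<le> (if b \<in> set ys then 0 else c)" if ys: "ys \<in> La" for ys
  proof -
    have ysR: "set ys \<subseteq> R - {a}" "distinct ys" "length ys = k" using ys unfolding La_def samples_wo_repl_def by auto
    have aL: "a # ys \<in> samples_wo_repl R (Suc k)" using ysR ab unfolding samples_wo_repl_def by auto
    show ?thesis
    proof (cases "b \<in> set ys")
      case True
      have bL: "b # map \<tau> ys \<in> samples_wo_repl R (Suc k)"
        using mapLa[OF ys] ab False unfolding Lb_def samples_wo_repl_def by auto
      have "set (map \<tau> ys) = insert a (set ys - {b})"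
      proof -
        have "\<tau> ` set ys = insert a (set ys - {b})"
          using True ysR(1) unfolding \<tau>_def by (auto simp: image_iff)
        then show ?thesis by simp
      qed
      then have "set (a # ys) = set (b # map \<tau> ys)" using True by auto
      then have "f (a # ys) = f (b # map \<tau> ys)" using sym aL bL unfolding symL_def by blast
      then show ?thesis using True by simp
    next
      case False2: False
      have "map \<tau> ys = ys" using False2 ysR(1) unfolding \<tau>_def by (intro map_idI) auto
      moreover have "(a # ys)[0 := b] = b # ys" by simp
      moreover have "b \<in> R - set (a # ys)" using False2 False ab by auto
      ultimately have "\<bar>f (a # ys) - f (b # map \<tau> ys)\<bar> \<le> c"
        using bd aL unfolding bdL_def by (metis zero_less_Suc)
      then show ?thesis using False2 by simp
    qed
  qed
  have "(\<Sum>ys\<in>La. f (a # ys)) - (\<Sum>ys\<in>Lb. f (b # ys)) = (\<Sum>ys\<in>La. f (a # ys) - f (b # map \<tau> ys))"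
    unfolding sb by (simp add: sum_subtractf)
  also have "\<dots> \<le> (\<Sum>ys\<in>La. if b \<in> set ys then 0 else c)"
    by (intro sum_mono tm)
  also have "\<dots> = (\<Sum>ys\<in>{ys\<in>La. b \<notin> set ys}. c)"
    by (subst sum.inter_filter[OF finLa(1)]) (auto intro!: sum.cong)
  also have "{ys\<in>La. b \<notin> set ys} = samples_wo_repl (R - {a} - {b}) k"
    unfolding La_def samples_wo_repl_def by auto
  finally have ineq: "(\<Sum>ys\<in>La. f (a # ys)) - (\<Sum>ys\<in>Lb. f (b # ys)) \<le> c * card (samples_wo_repl (R - {a} - {b}) k)"
    by (simp add: mult.commute)
  have ratio: "real (card (samples_wo_repl (R - {a} - {b}) k)) / real (card La) = real u / (real k + real u)"
    unfolding La_def by (rule card_ratio) (use fin cRa u ab False in auto)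
  have "(\<Sum>ys\<in>La. f (a # ys)) / card La - (\<Sum>ys\<in>Lb. f (b # ys)) / card Lb
      = ((\<Sum>ys\<in>La. f (a # ys)) - (\<Sum>ys\<in>Lb. f (b # ys))) / card La"
    using cLab by (simp add: diff_divide_distrib)
  also have "\<dots> \<le> c * card (samples_wo_repl (R - {a} - {b}) k) / card La"
    using ineq Npos by (intro divide_right_mono) auto
  also have "\<dots> = c * (real (card (samples_wo_repl (R - {a} - {b}) k)) / real (card La))" by simp
  also have "\<dots> = c * real u / (real k + real u)" using ratio by simp
  finally show ?thesis unfolding La_def Lb_def .
qed



lemma core:
  fixes u :: nat and c l :: real and f :: "'a list \<Rightarrow> real"
  assumes u: "u \<ge> 1" and l: "l > 0" and c: "c \<ge> 0"
  shows "finite R \<Longrightarrow> card R = k + u \<Longrightarrow> symL R k f \<Longrightarrow> bdL R k c f \<Longrightarrow>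
    (\<Sum>xs\<in>samples_wo_repl R k. exp (l * (f xs - (\<Sum>ys\<in>samples_wo_repl R k. f ys) / card (samples_wo_repl R k))))
      / card (samples_wo_repl R k) \<le> exp (l\<^sup>2 * c\<^sup>2 * SS u k / 8)"
proof (induction k arbitrary: R f)
  case 0
  have "samples_wo_repl R 0 = {[]}" unfolding samples_wo_repl_def by auto
  then show ?case by (simp add: SS_def)
next
  case (Suc k)
  note fin = Suc.prems(1)
  define L where "L = samples_wo_repl R (Suc k)"
  define Lx where "Lx x = samples_wo_repl (R - {x}) k" for x
  have Rne: "R \<noteq> {}" using Suc.prems(2) by auto
  then obtain x0 where x0: "x0 \<in> R" by auto
  define N where "N = card (Lx x0)"
  have cRx: "card (R - {x}) = k + u" if "x \<in> R" for x using that fin Suc.prems(2) by auto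
  have cLx: "card (Lx x) = N" if "x \<in> R" for x
    unfolding N_def Lx_def
    using card_lists_distinct_length_eq[of "R - {x}" k] card_lists_distinct_length_eq[of "R - {x0}" k]
      fin cRx[OF that] cRx[OF x0] by (simp add: swr_alt)
  have Npos: "N > 0" unfolding N_def Lx_def using card_swr_pos[of "R - {x0}" k] fin cRx[OF x0] by simp
  have finLx: "finite (Lx x)" for x unfolding Lx_def using fin by (simp add: finite_swr)
  have cL: "card L = card R * N"
  proof -
    have "card L = (\<Sum>xs\<in>L. 1)" by simp
    also have "\<dots> = (\<Sum>x\<in>R. \<Sum>ys\<in>Lx x. 1)" unfolding L_def Lx_def by (rule sum_swr_Suc[OF fin])
    also have "\<dots> = (\<Sum>x\<in>R. N)" using cLx by simp
    finally show ?thesis by simp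
  qed
  define g where "g x = (\<Sum>ys\<in>Lx x. f (x # ys)) / N" for x
  define \<mu> where "\<mu> = (\<Sum>x\<in>R. g x) / card R"
  have cRpos: "card R > 0" using Suc.prems(2) by simp
  have mean: "(\<Sum>ys\<in>L. f ys) / card L = \<mu>"
  proof -
    have "(\<Sum>ys\<in>L. f ys) = (\<Sum>x\<in>R. \<Sum>ys\<in>Lx x. f (x # ys))" unfolding L_def Lx_def by (rule sum_swr_Suc[OF fin])
    also have "\<dots> = (\<Sum>x\<in>R. N * g x)" using Npos unfolding g_def by simp
    also have "\<dots> = N * (\<Sum>x\<in>R. g x)" by (simp add: sum_distrib_left)
    finally show ?thesis unfolding cL \<mu>_def using Npos by simp
  qed
  define E where "E = exp (l\<^sup>2 * c\<^sup>2 * SS u k / 8)"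
  have IH: "(\<Sum>ys\<in>Lx x. exp (l * (f (x # ys) - g x))) \<le> N * E" if x: "x \<in> R" for x
  proof -
    have s: "symL (R - {x}) k (\<lambda>ys. f (x # ys))"
      unfolding symL_def
    proof (intro ballI impI)
      fix xs ys assume "xs \<in> samples_wo_repl (R - {x}) k" "ys \<in> samples_wo_repl (R - {x}) k" "set xs = set ys"
      then have "x # xs \<in> samples_wo_repl R (Suc k)" "x # ys \<in> samples_wo_repl R (Suc k)" "set (x # xs) = set (x # ys)"
        using x unfolding samples_wo_repl_def by auto
      then show "f (x # xs) = f (x # ys)" using Suc.prems(3) unfolding symL_def by blast
    qed
    have b: "bdL (R - {x}) k c (\<lambda>ys. f (x # ys))"
      unfolding bdL_def
    proof (intro ballI allI impI)
      fix ys i x' assume ys: "ys \<in> samples_wo_repl (R - {x}) k" and i: "i < k" and x': "x' \<in> R - {x} - set ys"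
      have "x # ys \<in> samples_wo_repl R (Suc k)" using ys x unfolding samples_wo_repl_def by auto
      moreover have "Suc i < Suc k" using i by simp
      moreover have "x' \<in> R - set (x # ys)" using x' by auto
      ultimately have "\<bar>f (x # ys) - f ((x # ys)[Suc i := x'])\<bar> \<le> c"
        using Suc.prems(4) unfolding bdL_def by blast
      then show "\<bar>f (x # ys) - f (x # ys[i := x'])\<bar> \<le> c" by simp
    qed
    have "(\<Sum>ys\<in>Lx x. exp (l * (f (x # ys) - g x))) / N \<le> E"
      using Suc.IH[OF _ cRx[OF x] s b] fin cLx[OF x] unfolding E_def g_def Lx_def by simp
    then show ?thesis using Npos by (simp add: field_simps)
  qed
  define d where "d = c * real u / (real k + real u)"
  have gd: "g x - g y \<le> d" if "x \<in> R" "y \<in> R" for x y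
    unfolding g_def d_def
    using coupling[OF fin _ u Suc.prems(3) Suc.prems(4) c that] Suc.prems(2) cLx that
    unfolding Lx_def by simp
  have hoe: "(\<Sum>x\<in>R. exp (l * (g x - \<mu>))) / card R \<le> exp (l\<^sup>2 * d\<^sup>2 / 8)"
    unfolding \<mu>_def by (rule hoeff_finite[OF fin Rne gd l])
  have "(\<Sum>xs\<in>L. exp (l * (f xs - \<mu>))) = (\<Sum>x\<in>R. \<Sum>ys\<in>Lx x. exp (l * (f (x # ys) - \<mu>)))"
    unfolding L_def Lx_def by (rule sum_swr_Suc[OF fin])
  also have "\<dots> = (\<Sum>x\<in>R. (\<Sum>ys\<in>Lx x. exp (l * (f (x # ys) - g x))) * exp (l * (g x - \<mu>)))"
  proof (intro sum.cong refl)
    fix x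
    have "(\<Sum>ys\<in>Lx x. exp (l * (f (x # ys) - g x))) * exp (l * (g x - \<mu>))
        = (\<Sum>ys\<in>Lx x. exp (l * (f (x # ys) - g x)) * exp (l * (g x - \<mu>)))"
      by (simp add: sum_distrib_right)
    also have "\<dots> = (\<Sum>ys\<in>Lx x. exp (l * (f (x # ys) - \<mu>)))"
      by (intro sum.cong refl) (simp add: exp_add[symmetric] algebra_simps)
    finally show "(\<Sum>ys\<in>Lx x. exp (l * (f (x # ys) - \<mu>))) = (\<Sum>ys\<in>Lx x. exp (l * (f (x # ys) - g x))) * exp (l * (g x - \<mu>))" by simp
  qed
  also have "\<dots> \<le> (\<Sum>x\<in>R. (N * E) * exp (l * (g x - \<mu>)))"
    by (intro sum_mono mult_right_mono IH) auto
  finally have "(\<Sum>xs\<in>L. exp (l * (f xs - \<mu>))) / card L \<le> (\<Sum>x\<in>R. (N * E) * exp (l * (g x - \<mu>))) / (card R * N)"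
    unfolding cL using Npos cRpos by (intro divide_right_mono) auto
  also have "\<dots> = E * ((\<Sum>x\<in>R. exp (l * (g x - \<mu>))) / card R)"
    using Npos by (simp add: sum_distrib_left[symmetric] field_simps)
  also have "\<dots> \<le> E * exp (l\<^sup>2 * d\<^sup>2 / 8)"
    unfolding E_def by (intro mult_left_mono hoe) auto
  also have "\<dots> = exp (l\<^sup>2 * c\<^sup>2 * SS u (Suc k) / 8)"
    unfolding E_def d_def SS_def by (simp add: exp_add[symmetric] power_divide power_mult_distrib field_simps)
  finally show ?case using mean unfolding L_def by simp
qed



definition CS :: "'a set \<Rightarrow> nat \<Rightarrow> 'a set set" where
  "CS R k = {S. S \<subseteq> R \<and> card S = k}"

lemma finite_CS: "finite R \<Longrightarrow> finite (CS R k)"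
  unfolding CS_def by (rule finite_subset[of _ "Pow R"]) auto

lemma group_sets:
  assumes fin: "finite R"
  shows "(\<Sum>xs\<in>samples_wo_repl R k. h (set xs)) = fact k * (\<Sum>S\<in>CS R k. h S)"
proof -
  have img: "set ` samples_wo_repl R k \<subseteq> CS R k"
    unfolding CS_def samples_wo_repl_def by (auto simp: distinct_card)
  have "(\<Sum>xs\<in>samples_wo_repl R k. h (set xs))
      = (\<Sum>S\<in>CS R k. \<Sum>xs\<in>{xs. xs \<in> samples_wo_repl R k \<and> set xs = S}. h (set xs))"
    by (rule sum.group[symmetric, OF finite_swr[OF fin] finite_CS[OF fin] img])
  also have "\<dots> = (\<Sum>S\<in>CS R k. fact k * h S)"
  proof (intro sum.cong refl)
    fix S assume S: "S \<in> CS R k"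
    have eq: "{xs. xs \<in> samples_wo_repl R k \<and> set xs = S} = permutations_of_set S"
      using S unfolding CS_def samples_wo_repl_def permutations_of_set_def
      by (auto simp: distinct_card)
    have fS: "finite S" using S fin unfolding CS_def by (auto intro: finite_subset)
    have "(\<Sum>xs\<in>{xs. xs \<in> samples_wo_repl R k \<and> set xs = S}. h (set xs))
        = (\<Sum>xs\<in>permutations_of_set S. h S)"
      unfolding eq by (intro sum.cong refl) (auto simp: permutations_of_set_def)
    also have "\<dots> = fact k * h S" using S fS unfolding CS_def by simp
    finally show "(\<Sum>xs\<in>{xs. xs \<in> samples_wo_repl R k \<and> set xs = S}. h (set xs)) = fact k * h S" .
  qed
  finally show ?thesis by (simp add: sum_distrib_left)
qed

lemma avg_group:
  assumes fin: "finite R"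
  shows "(\<Sum>xs\<in>samples_wo_repl R k. h (set xs)) / card (samples_wo_repl R k)
       = (\<Sum>S\<in>CS R k. h S) / card (CS R k)"
proof -
  have c: "real (card (samples_wo_repl R k)) = fact k * card (CS R k)"
    using group_sets[OF fin, of "\<lambda>_. 1::real"] by simp
  show ?thesis unfolding group_sets[OF fin] c by simp
qed

lemma compl_sum:
  assumes fin: "finite X" and cX: "card X = m + u"
  shows "(\<Sum>T\<in>CS X u. h (X - T)) = (\<Sum>S\<in>CS X m. h S)" "card (CS X u) = card (CS X m)"
proof -
  have bij: "bij_betw (\<lambda>T. X - T) (CS X u) (CS X m)"
  proof (rule bij_betw_byWitness[where f' = "\<lambda>T. X - T"])
    show "\<forall>a\<in>CS X u. X - (X - a) = a" unfolding CS_def by auto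
    show "\<forall>a\<in>CS X m. X - (X - a) = a" unfolding CS_def by auto
    show "(\<lambda>T. X - T) ` CS X u \<subseteq> CS X m" unfolding CS_def using fin cX
      by (auto simp: card_Diff_subset finite_subset)
    show "(\<lambda>T. X - T) ` CS X m \<subseteq> CS X u" unfolding CS_def using fin cX
      by (auto simp: card_Diff_subset finite_subset)
  qed
  show "(\<Sum>T\<in>CS X u. h (X - T)) = (\<Sum>S\<in>CS X m. h S)"
    using sum.reindex_bij_betw[OF bij, of h] .
  show "card (CS X u) = card (CS X m)" using bij_betw_same_card[OF bij] .
qed



definition lst :: "'a set \<Rightarrow> 'a list" where
  "lst S = (SOME xs. set xs = S \<and> distinct xs)"

lemma lst: "finite S \<Longrightarrow> set (lst S) = S \<and> distinct (lst S)"
  unfolding lst_def by (rule someI_ex) (rule finite_distinct_list)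

lemma lst_in: "finite X \<Longrightarrow> S \<subseteq> X \<Longrightarrow> card S = m \<Longrightarrow> lst S \<in> samples_wo_repl X m"
  using lst[of S] finite_subset[of S X] distinct_card[of "lst S"] unfolding samples_wo_repl_def by auto

lemma mgf_bound:
  fixes X :: "'a set" and m u :: nat and \<phi> :: "'a list \<Rightarrow> real" and c :: real
  assumes fin: "finite X" and cX: "card X = m + u" and m1: "m \<ge> 1" and u1: "u \<ge> 1"
    and symm: "symmetric_on X m \<phi>"
    and bd: "\<And>xs i x'. set xs \<subseteq> X \<Longrightarrow> length xs = m \<Longrightarrow> i < m \<Longrightarrow> x' \<in> X \<Longrightarrow>
           \<bar>\<phi> xs - \<phi> (xs[i := x'])\<bar> \<le> c"
    and c: "c \<ge> 0"
  obtains T where "T \<le> alpha m u * c\<^sup>2" "T \<ge> 0" "T = 0 \<or> c > 0"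
    "\<And>l. l > 0 \<Longrightarrow> (\<Sum>xs\<in>samples_wo_repl X m. exp (l * (\<phi> xs - (\<Sum>ys\<in>samples_wo_repl X m. \<phi> ys) / card (samples_wo_repl X m))))
      / card (samples_wo_repl X m) \<le> exp (l\<^sup>2 * T / 8)"
    "c > 0 \<Longrightarrow> T > 0"
proof -
  define L where "L = samples_wo_repl X m"
  have symL: "\<phi> xs = \<phi> ys" if "xs \<in> L" "ys \<in> L" "set xs = set ys" for xs ys
    using sym_from_symmetric_on[OF symm] that unfolding L_def by blast
  have SSpos: "SS a b > 0" if "a \<ge> 1" "b \<ge> 1" for a b
  proof -
    have "(real a / (real a + real 0))\<^sup>2 \<le> SS a b" unfolding SS_def
      by (rule member_le_sum[of 0 "{..<b}" "\<lambda>j. (real a / (real a + real j))\<^sup>2"]) (use that in auto)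
    then show ?thesis using that by simp
  qed
  show ?thesis
  proof (cases "m \<le> u")
    case True
    define T where "T = c\<^sup>2 * SS u m"
    have a: "alpha m u = real m * real u / (real m + real u - 1/2) * (1 / (1 - 1 / (2 * real u)))"
      unfolding alpha_def using True by (simp add: max_def)
    have "T \<le> alpha m u * c\<^sup>2" unfolding T_def a
      using mult_right_mono[OF SS_bound[OF u1 m1] zero_le_power2[of c]] by (simp add: mult.commute)
    moreover have "T \<ge> 0" unfolding T_def using SSpos[OF u1 m1] by simp
    moreover have "c > 0 \<Longrightarrow> T > 0" unfolding T_def using SSpos[OF u1 m1] by simp
    moreover have "T = 0 \<or> c > 0" unfolding T_def using c by auto
    moreover have "(\<Sum>xs\<in>L. exp (l * (\<phi> xs - (\<Sum>ys\<in>L. \<phi> ys) / card L))) / card L \<le> exp (l\<^sup>2 * T / 8)"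
      if l: "l > 0" for l
    proof -
      have s: "symL X m \<phi>" unfolding symL_def using symL L_def by blast
      have b: "bdL X m c \<phi>" unfolding bdL_def samples_wo_repl_def using bd by auto
      show ?thesis using core[OF u1 l c fin _ s b] cX unfolding T_def L_def by (simp add: mult.assoc)
    qed
    ultimately show ?thesis using that unfolding L_def by blast
  next
    case False
    define T where "T = c\<^sup>2 * SS m u"
    have a: "alpha m u = real u * real m / (real u + real m - 1/2) * (1 / (1 - 1 / (2 * real m)))"
      unfolding alpha_def using False by (simp add: max_def mult.commute add.commute)
    have "T \<le> alpha m u * c\<^sup>2" unfolding T_def a
      using mult_right_mono[OF SS_bound[OF m1 u1] zero_le_power2[of c]] by (simp add: mult.commute)
    moreover have "T \<ge> 0" unfolding T_def using SSpos[OF m1 u1] by simp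
    moreover have "c > 0 \<Longrightarrow> T > 0" unfolding T_def using SSpos[OF m1 u1] by simp
    moreover have "T = 0 \<or> c > 0" unfolding T_def using c by auto
    moreover have "(\<Sum>xs\<in>L. exp (l * (\<phi> xs - (\<Sum>ys\<in>L. \<phi> ys) / card L))) / card L \<le> exp (l\<^sup>2 * T / 8)"
      if l: "l > 0" for l
    proof -
      define Lu where "Lu = samples_wo_repl X u"
      define \<psi> where "\<psi> zs = \<phi> (lst (X - set zs))" for zs
      have transfer: "(\<Sum>xs\<in>L. F (\<phi> xs)) / card L = (\<Sum>zs\<in>Lu. F (\<psi> zs)) / card Lu" for F :: "real \<Rightarrow> real"
      proof -
        have "(\<Sum>xs\<in>L. F (\<phi> xs)) = (\<Sum>xs\<in>L. F (\<phi> (lst (set xs))))"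
        proof (intro sum.cong refl)
          fix xs assume xs: "xs \<in> L"
          have "lst (set xs) \<in> L" unfolding L_def
            by (rule lst_in[OF fin]) (use xs in \<open>auto simp: L_def samples_wo_repl_def distinct_card\<close>)
          moreover have "set (lst (set xs)) = set xs" using lst[of "set xs"] by simp
          ultimately have "\<phi> xs = \<phi> (lst (set xs))" using symL[OF xs] by simp
          then show "F (\<phi> xs) = F (\<phi> (lst (set xs)))" by simp
        qed
        then have "(\<Sum>xs\<in>L. F (\<phi> xs)) / card L = (\<Sum>S\<in>CS X m. F (\<phi> (lst S))) / card (CS X m)"
          unfolding L_def using avg_group[OF fin, of "\<lambda>S. F (\<phi> (lst S))" m] by simp
        also have "\<dots> = (\<Sum>T\<in>CS X u. F (\<phi> (lst (X - T)))) / card (CS X u)"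
          using compl_sum(1)[OF fin cX, of "\<lambda>S. F (\<phi> (lst S))"] compl_sum(2)[OF fin cX] by simp
        also have "\<dots> = (\<Sum>zs\<in>Lu. F (\<psi> zs)) / card Lu"
          unfolding Lu_def \<psi>_def using avg_group[OF fin, of "\<lambda>T. F (\<phi> (lst (X - T)))" u] by simp
        finally show ?thesis .
      qed
      have mean: "(\<Sum>ys\<in>L. \<phi> ys) / card L = (\<Sum>ys\<in>Lu. \<psi> ys) / card Lu"
        using transfer[of "\<lambda>v. v"] by simp
      have s: "symL X u \<psi>" unfolding symL_def \<psi>_def by auto
      have b: "bdL X u c \<psi>" unfolding bdL_def
      proof (intro ballI allI impI)
        fix zs i x' assume zs: "zs \<in> samples_wo_repl X u" and i: "i < u" and x': "x' \<in> X - set zs"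
        have zsX: "set zs \<subseteq> X" "distinct zs" "length zs = u" using zs unfolding samples_wo_repl_def by auto
        define A where "A = X - set zs"
        define y where "y = zs ! i"
        have y: "y \<in> set zs" "y \<in> X" using i zsX unfolding y_def by auto
        have cA: "card A = m" unfolding A_def using zsX fin cX by (simp add: card_Diff_subset distinct_card)
        have fA: "finite A" unfolding A_def using fin by simp
        define p where "p = lst A"
        have p: "p \<in> L" unfolding p_def L_def by (rule lst_in[OF fin _ cA]) (auto simp: A_def)
        have sp: "set p = A" "distinct p" "length p = m" using lst[OF fA] p unfolding p_def L_def samples_wo_repl_def by auto
        obtain j where j: "j < m" "p ! j = x'" using x' sp unfolding A_def by (metis in_set_conv_nth)
        have yA: "y \<notin> A" using y unfolding A_def by auto
        have sz: "set (zs[i := x']) = insert x' (set zs - {y})"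
          unfolding y_def by (rule set_update_distinct[OF zsX(2)]) (use i zsX(3) in simp)
        have A': "X - set (zs[i := x']) = insert y (A - {x'})"
          unfolding sz A_def using y x' by blast
        have spu: "set (p[j := y]) = insert y (set p - {x'})"
          using set_update_distinct[OF sp(2), of j y] j sp(3) by simp
        have dq: "distinct (p[j := y])"
          by (rule distinct_list_update[OF sp(2)]) (use yA sp(1) in blast)
        have q: "p[j := y] \<in> L"
          unfolding L_def samples_wo_repl_def using dq spu sp y(2) by (auto simp: A_def)
        have sq: "set (p[j := y]) = X - set (zs[i := x'])"
          unfolding A' spu sp(1) ..
        have fA': "finite (X - set (zs[i := x']))" using fin by simp
        have l2: "lst (X - set (zs[i := x'])) \<in> L" unfolding L_def
        proof (rule lst_in[OF fin])
          show "X - set (zs[i := x']) \<subseteq> X" by blast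
          have "card (set (p[j := y])) = m" using distinct_card[OF dq] sp(3) by simp
          then show "card (X - set (zs[i := x'])) = m" using sq by simp
        qed
        have "\<phi> (lst (X - set (zs[i := x']))) = \<phi> (p[j := y])"
          using symL[OF l2 q] lst[OF fA'] sq by simp
        moreover have "\<bar>\<phi> p - \<phi> (p[j := y])\<bar> \<le> c"
          using bd[of p j y] sp j y unfolding A_def by auto
        ultimately show "\<bar>\<psi> zs - \<psi> (zs[i := x'])\<bar> \<le> c"
          unfolding \<psi>_def p_def A_def by simp
      qed
      have cX': "card X = u + m" using cX by simp
      have "(\<Sum>xs\<in>L. exp (l * (\<phi> xs - (\<Sum>ys\<in>L. \<phi> ys) / card L))) / card L
          = (\<Sum>zs\<in>Lu. exp (l * (\<psi> zs - (\<Sum>ys\<in>Lu. \<psi> ys) / card Lu))) / card Lu"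
        unfolding mean by (rule transfer)
      also have "\<dots> \<le> exp (l\<^sup>2 * T / 8)"
        using core[OF m1 l c fin cX' s b] unfolding T_def Lu_def by (simp add: mult.assoc)
      finally show ?thesis .
    qed
    ultimately show ?thesis using that unfolding L_def by blast
  qed
qed



theorem theorem5:
  fixes X :: "'a set" and m u :: nat and \<phi> :: "'a list \<Rightarrow> real" and c \<epsilon> :: real
  assumes "finite X" and "card X = m + u" and "m \<ge> 1" and "u \<ge> 1"
    and "symmetric_on X m \<phi>"
    and "\<And>xs i x'. set xs \<subseteq> X \<Longrightarrow> length xs = m \<Longrightarrow> i < m \<Longrightarrow> x' \<in> X \<Longrightarrow>
           \<bar>\<phi> xs - \<phi> (xs[i := x'])\<bar> \<le> c"
    and "\<epsilon> > 0"
  shows "measure_pmf.prob (pmf_of_set (samples_wo_repl X m))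
           {xs. \<phi> xs - measure_pmf.expectation (pmf_of_set (samples_wo_repl X m)) \<phi> \<ge> \<epsilon>}
         \<le> exp (- 2 * \<epsilon>^2 / (alpha m u * c^2))"
proof -
  note fin = assms(1) and cX = assms(2) and m1 = assms(3) and u1 = assms(4)
    and symm = assms(5) and bd = assms(6) and eps = assms(7)
  define L where "L = samples_wo_repl X m"
  have finL: "finite L" unfolding L_def using fin by (rule finite_swr)
  have cLpos: "card L > 0" unfolding L_def using card_swr_pos[OF fin] cX by simp
  then have Lne: "L \<noteq> {}" by auto
  then obtain xs0 where xs0: "xs0 \<in> L" by auto
  have c: "c \<ge> 0"
  proof -
    have x0: "set xs0 \<subseteq> X" "length xs0 = m" using xs0 unfolding L_def samples_wo_repl_def by auto
    have "0 < length xs0" using x0 m1 by simp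
    then have "xs0 ! 0 \<in> set xs0" by (rule nth_mem)
    then have "xs0 ! 0 \<in> X" using x0 by blast
    then show ?thesis using bd[OF x0 _ , of 0 "xs0 ! 0"] m1 by simp
  qed
  define E where "E = (\<Sum>ys\<in>L. \<phi> ys) / card L"
  define A where "A = {xs. \<phi> xs - E \<ge> \<epsilon>}"
  have expE: "measure_pmf.expectation (pmf_of_set L) \<phi> = E"
    unfolding E_def by (rule integral_pmf_of_set[OF Lne finL])
  have prob: "measure_pmf.prob (pmf_of_set L) A = card (L \<inter> A) / card L"
    by (rule measure_pmf_of_set[OF Lne finL])
  obtain T where T: "T \<le> alpha m u * c\<^sup>2" "T \<ge> 0" "T = 0 \<or> c > 0"
    "\<And>l. l > 0 \<Longrightarrow> (\<Sum>xs\<in>L. exp (l * (\<phi> xs - E))) / card L \<le> exp (l\<^sup>2 * T / 8)"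
    "c > 0 \<Longrightarrow> T > 0"
    using mgf_bound[OF fin cX m1 u1 symm bd c] unfolding L_def E_def by blast
  have goal: "measure_pmf.prob (pmf_of_set L) A \<le> exp (- 2 * \<epsilon>^2 / (alpha m u * c^2))"
  proof (cases "c > 0")
    case False
    then have "c = 0" using c by simp
    then show ?thesis using measure_pmf.prob_le_1 by simp
  next
    case True
    have Tp: "T > 0" using T(5)[OF True] .
    define l where "l = 4 * \<epsilon> / T"
    have l: "l > 0" unfolding l_def using Tp eps by simp
    have "real (card (L \<inter> A)) = (\<Sum>xs\<in>L. if xs \<in> A then 1 else 0)"
      using finL by (simp add: sum.If_cases Int_commute)
    also have "\<dots> \<le> (\<Sum>xs\<in>L. exp (l * (\<phi> xs - E)) * exp (- l * \<epsilon>))"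
    proof (intro sum_mono)
      fix xs
      show "(if xs \<in> A then 1 else 0) \<le> exp (l * (\<phi> xs - E)) * exp (- l * \<epsilon>)"
      proof (cases "xs \<in> A")
        case True
        then have "\<phi> xs - E - \<epsilon> \<ge> 0" unfolding A_def by simp
        then have "l * (\<phi> xs - E - \<epsilon>) \<ge> 0" using l by simp
        then have "l * (\<phi> xs - E) + (- l * \<epsilon>) \<ge> 0" by (simp add: algebra_simps)
        then have "1 \<le> exp (l * (\<phi> xs - E) + (- l * \<epsilon>))" by (simp only: one_le_exp_iff)
        then show ?thesis using True by (simp only: exp_add if_True)
      qed simp
    qed
    also have "\<dots> = exp (- l * \<epsilon>) * (\<Sum>xs\<in>L. exp (l * (\<phi> xs - E)))"
      by (simp add: sum_distrib_left mult.commute)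
    finally have "card (L \<inter> A) / card L \<le> exp (- l * \<epsilon>) * ((\<Sum>xs\<in>L. exp (l * (\<phi> xs - E))) / card L)"
      using cLpos by (simp add: divide_right_mono)
    also have "\<dots> \<le> exp (- l * \<epsilon>) * exp (l\<^sup>2 * T / 8)"
      by (intro mult_left_mono T(4) l) auto
    also have "\<dots> = exp (- 2 * \<epsilon>^2 / T)"
      unfolding l_def using Tp by (simp add: exp_add[symmetric] power2_eq_square field_simps)
    also have "\<dots> \<le> exp (- 2 * \<epsilon>^2 / (alpha m u * c^2))"
    proof -
      have "2 * \<epsilon>^2 / (alpha m u * c^2) \<le> 2 * \<epsilon>^2 / T"
        using T(1) Tp by (intro divide_left_mono) auto
      then show ?thesis by simp
    qed
    finally show ?thesis unfolding prob .
  qed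
  then show ?thesis unfolding L_def A_def expE[unfolded L_def] by simp
qed

end
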